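(* The VCCR $scwc$ satisfies Availability; in fact, $scwc(\mathbf P)$ is acyclic for every linear profile $\mathbf P$.
   Context: Profiles: $\mathbf P:V\to\mathcal L(X)$, $V$ nonempty finite set of voters, $X=X(\mathbf P)$ nonempty finite set of candidates, $\mathcal L(X)$ strict linear orders. $\mathrm{Margin}_{\mathbf P}(x,y)$ = #voters ranking $x$ above $y$ minus #ranking $y$ above $x$. Majority path: sequence of candidates with positive consecutive margins; strength = minimum of those margins. $(x,y)\in sc(\mathbf P)$ iff $\mathrm{Margin}_{\mathbf P}(x,y)>0$ exceeds the strength of every majority path from $y$ to $x$. $(x,y)\in wc(\mathbf P)$ iff $\mathrm{Margin}_{\mathbf P}(x,y)>0$ and $\mathrm{Margin}_{\mathbf P}(x,z)\ge\mathrm{Margin}_{\mathbf P}(y,z)$ for all $z\in X(\mathbf P)$. $scwc(\mathbf P)=sc(\mathbf P)\cup wc(\mathbf P)$. Availability: for every profile some candidate $x$ has no $y$ with $(y,x)\in scwc(\mathbf P)$. *)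

theory Defs
  imports Main
begin

text \<open>A profile on voters V and candidates X: each voter i in V gets a strict
linear order P i on X (represented as a relation: (x,y) in P i means i ranks x above y).\<close>

definition strict_linear_order_on :: "'c set \<Rightarrow> ('c \<times> 'c) set \<Rightarrow> bool" where
  "strict_linear_order_on X R \<longleftrightarrow> R \<subseteq> X \<times> X \<and> irrefl R \<and> trans R \<and> total_on X R"

definition profile :: "'v set \<Rightarrow> 'c set \<Rightarrow> ('v \<Rightarrow> ('c \<times> 'c) set) \<Rightarrow> bool" where
  "profile V X P \<longleftrightarrow> finite V \<and> V \<noteq> {} \<and> finite X \<and> X \<noteq> {} \<and>
     (\<forall>i\<in>V. strict_linear_order_on X (P i))"

definition margin :: "'v set \<Rightarrow> ('v \<Rightarrow> ('c \<times> 'c) set) \<Rightarrow> 'c \<Rightarrow> 'c \<Rightarrow> int" where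
  "margin V P x y = int (card {i\<in>V. (x, y) \<in> P i}) - int (card {i\<in>V. (y, x) \<in> P i})"

definition majority_path :: "'v set \<Rightarrow> 'c set \<Rightarrow> ('v \<Rightarrow> ('c \<times> 'c) set) \<Rightarrow> 'c list \<Rightarrow> bool" where
  "majority_path V X P p \<longleftrightarrow> length p \<ge> 2 \<and> distinct p \<and> set p \<subseteq> X \<and>
     (\<forall>k. Suc k < length p \<longrightarrow> margin V P (p ! k) (p ! Suc k) > 0)"

definition path_strength :: "'v set \<Rightarrow> ('v \<Rightarrow> ('c \<times> 'c) set) \<Rightarrow> 'c list \<Rightarrow> int" where
  "path_strength V P p = Min {margin V P (p ! k) (p ! Suc k) | k. Suc k < length p}"

definition sc :: "'v set \<Rightarrow> 'c set \<Rightarrow> ('v \<Rightarrow> ('c \<times> 'c) set) \<Rightarrow> ('c \<times> 'c) set" where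
  "sc V X P = {(x, y). x \<in> X \<and> y \<in> X \<and> margin V P x y > 0 \<and>
     (\<forall>p. majority_path V X P p \<and> hd p = y \<and> last p = x \<longrightarrow>
          margin V P x y > path_strength V P p)}"

definition wc :: "'v set \<Rightarrow> 'c set \<Rightarrow> ('v \<Rightarrow> ('c \<times> 'c) set) \<Rightarrow> ('c \<times> 'c) set" where
  "wc V X P = {(x, y). x \<in> X \<and> y \<in> X \<and> margin V P x y > 0 \<and>
     (\<forall>z\<in>X. margin V P x z \<ge> margin V P y z)}"

definition scwc :: "'v set \<Rightarrow> 'c set \<Rightarrow> ('v \<Rightarrow> ('c \<times> 'c) set) \<Rightarrow> ('c \<times> 'c) set" where
  "scwc V X P = sc V X P \<union> wc V X P"

end

theory Submission
  imports Defs "HOL-Library.Transitive_Closure_Table"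
begin

definition G :: "'v set \<Rightarrow> 'c set \<Rightarrow> ('v \<Rightarrow> ('c \<times> 'c) set) \<Rightarrow> int \<Rightarrow> ('c \<times> 'c) set" where
  "G V X P t = {(u,v). u \<in> X \<and> v \<in> X \<and> margin V P u v \<ge> t}"

lemma margin_skew: "margin V P x y = - margin V P y x"
  unfolding margin_def by simp

lemma margin_refl: "margin V P x x = 0"
  unfolding margin_def by simp

lemma G_mono: "t' \<le> t \<Longrightarrow> G V X P t \<subseteq> G V X P t'"
  unfolding G_def by auto

lemma list_trancl:
  "length p \<ge> 2 \<Longrightarrow> (\<forall>k. Suc k < length p \<longrightarrow> (p!k, p!Suc k) \<in> R) \<Longrightarrow> (hd p, last p) \<in> R\<^sup>+"
proof (induction p)
  case Nil
  then show ?case by simp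
next
  case (Cons a p')
  have e: "(a, hd p') \<in> R" using Cons.prems(1) Cons.prems(2)[rule_format, of 0]
    by (cases p') auto
  show ?case
  proof (cases "length p' = 1")
    case True
    then obtain b where "p' = [b]" by (cases p') auto
    then show ?thesis using e by auto
  next
    case False
    then have l: "length p' \<ge> 2" using Cons.prems(1) by auto
    have "\<forall>k. Suc k < length p' \<longrightarrow> (p'!k, p'!Suc k) \<in> R"
    proof (intro allI impI)
      fix k assume "Suc k < length p'"
      then show "(p'!k, p'!Suc k) \<in> R" using Cons.prems(2)[rule_format, of "Suc k"] by simp
    qed
    with Cons.IH l have "(hd p', last p') \<in> R\<^sup>+" by blast
    moreover have "p' \<noteq> []" using l by auto
    ultimately show ?thesis using e by auto
  qed
qed

lemma path_strength_le:
  assumes "Suc k < length p"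
  shows "path_strength V P p \<le> margin V P (p ! k) (p ! Suc k)"
proof -
  have fin: "finite {margin V P (p ! k) (p ! Suc k) | k. Suc k < length p}"
  proof -
    have "{margin V P (p ! k) (p ! Suc k) | k. Suc k < length p} =
          (\<lambda>k. margin V P (p ! k) (p ! Suc k)) ` {k. Suc k < length p}" by auto
    moreover have "finite {k. Suc k < length p}"
      by (rule finite_subset[of _ "{..<length p}"]) auto
    ultimately show ?thesis by simp
  qed
  show ?thesis unfolding path_strength_def
    using assms by (intro Min_le[OF fin]) auto
qed

lemma L1:
  assumes "majority_path V X P p" and "path_strength V P p \<ge> t"
  shows "(hd p, last p) \<in> (G V X P t)\<^sup>+"
proof (rule list_trancl)
  show "length p \<ge> 2" using assms(1) unfolding majority_path_def by auto
  show "\<forall>k. Suc k < length p \<longrightarrow> (p!k, p!Suc k) \<in> G V X P t"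
  proof (intro allI impI)
    fix k assume k: "Suc k < length p"
    have "p!k \<in> set p" "p!Suc k \<in> set p" using k by simp_all
    then have "p!k \<in> X" "p!Suc k \<in> X" using assms(1) unfolding majority_path_def
      by auto
    moreover have "margin V P (p!k) (p!Suc k) \<ge> t"
      using path_strength_le[OF k, of V P] assms(2) by simp
    ultimately show "(p!k, p!Suc k) \<in> G V X P t" unfolding G_def by auto
  qed
qed

lemma L2:
  assumes "(a,b) \<in> (G V X P t)\<^sup>+" and "a \<noteq> b" and "t > 0"
  shows "\<exists>p. majority_path V X P p \<and> hd p = a \<and> last p = b \<and> path_strength V P p \<ge> t"
proof -
  let ?r = "\<lambda>u v. (u,v) \<in> G V X P t"
  have "(a,b) \<in> (G V X P t)\<^sup>*" using assms(1) by auto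
  then have "?r\<^sup>*\<^sup>* a b" by (simp add: rtranclp_rtrancl_eq)
  then obtain xs where "rtrancl_path ?r a xs b" by (auto simp: rtranclp_eq_rtrancl_path)
  then obtain xs' where pth: "rtrancl_path ?r a xs' b" and dist: "distinct (a # xs')"
    by (rule rtrancl_path_distinct)
  have ne: "xs' \<noteq> []" using pth assms(2)
    by (cases rule: rtrancl_path.cases) auto
  define p where "p = a # xs'"
  have edge: "?r (p!k) (p!Suc k)" if "Suc k < length p" for k
    using rtrancl_path_nth[OF pth, of k] that unfolding p_def by simp
  have aX: "a \<in> X" using edge[of 0] ne unfolding p_def G_def by (cases xs') auto
  have setX: "set p \<subseteq> X"
  proof
    fix z assume "z \<in> set p"
    then obtain i where i: "i < length p" "p ! i = z" by (auto simp: in_set_conv_nth)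
    show "z \<in> X"
    proof (cases i)
      case 0 then show ?thesis using i aX unfolding p_def by simp
    next
      case (Suc k) then show ?thesis using i edge[of k] unfolding G_def by auto
    qed
  qed
  have mp: "majority_path V X P p"
    unfolding majority_path_def
  proof (intro conjI allI impI)
    show "2 \<le> length p" using ne unfolding p_def by (cases xs') auto
    show "distinct p" using dist p_def by simp
    show "set p \<subseteq> X" by (rule setX)
    fix k assume "Suc k < length p"
    then show "0 < margin V P (p ! k) (p ! Suc k)" using edge[of k] assms(3) unfolding G_def by auto
  qed
  have "t \<le> path_strength V P p"
  proof -
    have eq: "{margin V P (p ! k) (p ! Suc k) | k. Suc k < length p} =
          (\<lambda>k. margin V P (p ! k) (p ! Suc k)) ` {k. Suc k < length p}" by auto
    have fin: "finite {margin V P (p ! k) (p ! Suc k) | k. Suc k < length p}"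
      unfolding eq by (rule finite_imageI, rule finite_subset[of _ "{..<length p}"]) auto
    have nem: "{margin V P (p ! k) (p ! Suc k) | k. Suc k < length p} \<noteq> {}"
      using ne unfolding p_def by (cases xs') auto
    show ?thesis unfolding path_strength_def Min_ge_iff[OF fin nem]
      using edge unfolding G_def by auto
  qed
  moreover have "hd p = a" unfolding p_def by simp
  moreover have "last p = b" unfolding p_def using rtrancl_path_last[OF pth ne] ne by simp
  ultimately show ?thesis using mp by blast
qed

lemma sc_iff:
  "(x,y) \<in> sc V X P \<longleftrightarrow> x \<in> X \<and> y \<in> X \<and> margin V P x y > 0 \<and>
     (y,x) \<notin> (G V X P (margin V P x y))\<^sup>+"
proof
  assume a: "(x,y) \<in> sc V X P"
  then have b: "x \<in> X" "y \<in> X" "margin V P x y > 0" unfolding sc_def by auto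
  have "x \<noteq> y" using b(3) margin_refl[of V P x] by auto
  moreover
  { assume "(y,x) \<in> (G V X P (margin V P x y))\<^sup>+"
    from L2[OF this _ b(3)] \<open>x \<noteq> y\<close> obtain p where
      "majority_path V X P p" "hd p = y" "last p = x" "path_strength V P p \<ge> margin V P x y"
      by blast
    with a have False unfolding sc_def by force }
  ultimately show "x \<in> X \<and> y \<in> X \<and> margin V P x y > 0 \<and>
     (y,x) \<notin> (G V X P (margin V P x y))\<^sup>+" using b by blast
next
  assume a: "x \<in> X \<and> y \<in> X \<and> margin V P x y > 0 \<and>
     (y,x) \<notin> (G V X P (margin V P x y))\<^sup>+"
  show "(x,y) \<in> sc V X P" unfolding sc_def
  proof (clarsimp simp: a, rule ccontr)
    fix p assume p: "majority_path V X P p" "y = hd p" "x = last p"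
      "\<not> path_strength V P p < margin V P (last p) (hd p)"
    then have "(hd p, last p) \<in> (G V X P (margin V P x y))\<^sup>+"
      by (intro L1) auto
    with a p show False by simp
  qed
qed

lemma wc_trans: "(x,y) \<in> wc V X P \<Longrightarrow> (y,z) \<in> wc V X P \<Longrightarrow> (x,z) \<in> wc V X P"
  unfolding wc_def by clarsimp (meson order_trans less_le_trans)

lemma wc_irrefl: "(x,x) \<notin> wc V X P"
  unfolding wc_def by (auto simp: margin_refl)

lemma wc_sc: assumes "(x,y) \<in> wc V X P" "(y,w) \<in> sc V X P" shows "(x,w) \<in> sc V X P"
proof -
  have w: "x \<in> X" "y \<in> X" "margin V P x y > 0" "\<forall>z\<in>X. margin V P x z \<ge> margin V P y z"
    using assms(1) unfolding wc_def by auto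
  have s: "w \<in> X" "margin V P y w > 0" "(w,y) \<notin> (G V X P (margin V P y w))\<^sup>+"
    using assms(2) unfolding sc_iff by auto
  have tt: "margin V P x w \<ge> margin V P y w" using w(4) s(1) by auto
  let ?t = "margin V P x w"
  have "(w,x) \<notin> (G V X P ?t)\<^sup>+"
  proof
    assume "(w,x) \<in> (G V X P ?t)\<^sup>+"
    then obtain u where wu: "(w,u) \<in> (G V X P ?t)\<^sup>*" and ux: "(u,x) \<in> G V X P ?t"
      by (metis tranclD2)
    have uX: "u \<in> X" and m: "margin V P u x \<ge> ?t" using ux unfolding G_def by auto
    have "margin V P u y \<ge> margin V P u x"
      using w(4) uX margin_skew[of V P u y] margin_skew[of V P u x] by force
    then have "(u,y) \<in> G V X P ?t" using uX w(2) m unfolding G_def by auto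
    with wu have "(w,y) \<in> (G V X P ?t)\<^sup>+" by auto
    then have "(w,y) \<in> (G V X P (margin V P y w))\<^sup>+"
      using trancl_mono G_mono[OF tt] by blast
    with s(3) show False by simp
  qed
  then show ?thesis unfolding sc_iff using w s tt by auto
qed

lemma sc_wc: assumes "(y,w) \<in> sc V X P" "(w,v) \<in> wc V X P" shows "(y,v) \<in> sc V X P"
proof -
  have w: "w \<in> X" "v \<in> X" "margin V P w v > 0" "\<forall>z\<in>X. margin V P w z \<ge> margin V P v z"
    using assms(2) unfolding wc_def by auto
  have s: "y \<in> X" "margin V P y w > 0" "(w,y) \<notin> (G V X P (margin V P y w))\<^sup>+"
    using assms(1) unfolding sc_iff by auto
  have tt: "margin V P y v \<ge> margin V P y w" using w(4) s(1)
    margin_skew[of V P y v] margin_skew[of V P y w] by force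
  let ?t = "margin V P y v"
  have "(v,y) \<notin> (G V X P ?t)\<^sup>+"
  proof
    assume "(v,y) \<in> (G V X P ?t)\<^sup>+"
    then obtain u where vu: "(v,u) \<in> G V X P ?t" and uy: "(u,y) \<in> (G V X P ?t)\<^sup>*"
      by (metis tranclD)
    have uX: "u \<in> X" and m: "margin V P v u \<ge> ?t" using vu unfolding G_def by auto
    have "margin V P w u \<ge> margin V P v u" using w(4) uX by auto
    then have "(w,u) \<in> G V X P ?t" using uX w(1) m unfolding G_def by auto
    with uy have "(w,y) \<in> (G V X P ?t)\<^sup>+" by auto
    then have "(w,y) \<in> (G V X P (margin V P y w))\<^sup>+"
      using trancl_mono G_mono[OF tt] by blast
    with s(3) show False by simp
  qed
  then show ?thesis unfolding sc_iff using w s tt by auto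
qed

lemma sc_subset_acyclic:
  assumes "finite X"
  shows "E \<subseteq> sc V X P \<Longrightarrow> acyclic E"
proof (induction "card E" arbitrary: E rule: less_induct)
  case less
  have scX: "sc V X P \<subseteq> X \<times> X" unfolding sc_def by auto
  have finE: "finite E" using less.prems scX assms by (meson finite_SigmaI finite_subset)
  show ?case
  proof (cases "E = {}")
    case True then show ?thesis by (simp add: acyclic_def)
  next
    case False
    define m where "m = Min ((\<lambda>(u,v). margin V P u v) ` E)"
    have "m \<in> (\<lambda>(u,v). margin V P u v) ` E" unfolding m_def using finE False by simp
    then obtain a b where ab: "(a,b) \<in> E" "margin V P a b = m" by auto
    have mle: "m \<le> margin V P u v" if "(u,v) \<in> E" for u v
      unfolding m_def using finE that by (intro Min_le) force+
    define E' where "E' = E - {(a,b)}"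
    have "card E' < card E" unfolding E'_def using ab(1) finE by (simp add: card_gt_0_iff) (metis card_0_eq diff_Suc_less empty_iff gr0I)
    moreover have "E' \<subseteq> sc V X P" using less.prems unfolding E'_def by auto
    ultimately have acE': "acyclic E'" using less.hyps by blast
    have Eins: "E = insert (a,b) E'" unfolding E'_def using ab(1) by auto
    have sab: "(a,b) \<in> sc V X P" using ab(1) less.prems by auto
    then have sab': "a \<in> X" "b \<in> X" "margin V P a b > 0" "(b,a) \<notin> (G V X P m)\<^sup>+"
      unfolding sc_iff ab(2) by auto
    have EG: "E \<subseteq> G V X P m"
    proof
      fix e assume "e \<in> E"
      then obtain u v where e: "e = (u,v)" "(u,v) \<in> E" by (cases e) auto
      then have "(u,v) \<in> sc V X P" using less.prems by auto
      then show "e \<in> G V X P m" using e mle[OF e(2)] unfolding sc_def G_def by auto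
    qed
    show ?thesis
    proof (rule ccontr)
      assume "\<not> acyclic E"
      then obtain x where "(x,x) \<in> E\<^sup>+" unfolding acyclic_def by blast
      then have "(x,x) \<in> E'\<^sup>+ \<or> ((x,a) \<in> E'\<^sup>* \<and> (b,x) \<in> E'\<^sup>*)"
        unfolding Eins trancl_insert by blast
      moreover have "(x,x) \<notin> E'\<^sup>+" using acE' unfolding acyclic_def by blast
      ultimately have "(b,a) \<in> E'\<^sup>*" by (meson rtrancl_trans)
      then have "(b,a) \<in> E\<^sup>*" using Eins rtrancl_mono[of E' E] by blast
      then have "(b,a) \<in> (G V X P m)\<^sup>*" using rtrancl_mono[OF EG] by blast
      moreover have "a \<noteq> b" using sab'(3) margin_refl[of V P a] by auto
      ultimately have "(b,a) \<in> (G V X P m)\<^sup>+" by (simp add: rtrancl_eq_or_trancl)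
      with sab'(4) show False by simp
    qed
  qed
qed

lemma key:
  "(x,y) \<in> (scwc V X P)\<^sup>+ \<Longrightarrow> (x,y) \<in> wc V X P \<or> (x,y) \<in> (sc V X P)\<^sup>+"
proof (induction rule: trancl_induct)
  case (base y)
  then show ?case unfolding scwc_def by auto
next
  case (step y z)
  from step.IH show ?case
  proof
    assume xy: "(x,y) \<in> wc V X P"
    from step.hyps(2) show ?thesis unfolding scwc_def
    proof
      assume yz: "(y,z) \<in> sc V X P"
      have "(x,z) \<in> sc V X P" by (rule wc_sc[OF xy yz])
      then show ?thesis by blast
    next
      assume yz: "(y,z) \<in> wc V X P"
      have "(x,z) \<in> wc V X P" by (rule wc_trans[OF xy yz])
      then show ?thesis by blast
    qed
  next
    assume xy: "(x,y) \<in> (sc V X P)\<^sup>+"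
    then obtain u where xu: "(x,u) \<in> (sc V X P)\<^sup>*" and uy: "(u,y) \<in> sc V X P"
      by (metis tranclD2)
    from step.hyps(2) show ?thesis unfolding scwc_def
    proof
      assume "(y,z) \<in> sc V X P" then show ?thesis using xy by (meson trancl.trancl_into_trancl)
    next
      assume yz: "(y,z) \<in> wc V X P"
      have "(u,z) \<in> sc V X P" by (rule sc_wc[OF uy yz])
      then show ?thesis using xu by (meson rtrancl_into_trancl1)
    qed
  qed
qed

theorem proposition8p2:
  fixes V :: "'v set" and X :: "'c set" and P :: "'v \<Rightarrow> ('c \<times> 'c) set"
  assumes "profile V X P"
  shows "(\<exists>x\<in>X. \<forall>y. (y, x) \<notin> scwc V X P) \<and> acyclic (scwc V X P)"
proof -
  have finX: "finite X" and neX: "X \<noteq> {}" using assms unfolding profile_def by auto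
  have acsc: "acyclic (sc V X P)" using sc_subset_acyclic[OF finX] by blast
  have ac: "acyclic (scwc V X P)"
    unfolding acyclic_def
  proof
    fix x
    show "(x,x) \<notin> (scwc V X P)\<^sup>+"
    proof
      assume "(x,x) \<in> (scwc V X P)\<^sup>+"
      from key[OF this] show False
        using wc_irrefl[of x V X P] acsc unfolding acyclic_def by blast
    qed
  qed
  have sub: "scwc V X P \<subseteq> X \<times> X" unfolding scwc_def sc_def wc_def by auto
  then have fin: "finite (scwc V X P)" using finX by (meson finite_SigmaI finite_subset)
  have wf: "wf (scwc V X P)" by (rule finite_acyclic_wf[OF fin ac])
  obtain x where "x \<in> X" "\<forall>y. (y,x) \<in> scwc V X P \<longrightarrow> y \<notin> X"
    using wfE_min[OF wf, of _ X] neX by blast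
  then have "\<exists>x\<in>X. \<forall>y. (y, x) \<notin> scwc V X P" using sub by blast
  with ac show ?thesis by blast
qed

end
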